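(* Let $E$ be a (real, Hausdorff) locally convex space and let $B\subseteq E$ be a bounded subset. Then $B$ is tame in $E$ if and only if $B$ contains no bounded $l^1$-sequence. Consequently, a locally convex space $E$ is tame if and only if $E$ contains no bounded $l^1$-sequence.
   Context: For a locally convex space $E$, $E^*$ denotes its topological dual and ${\rm eqc}(E^* )$ the family of all equicontinuous, weak-star compact subsets of $E^*$. A sequence of real functions $(f_n)_{n\in\mathbb N}$ on a set $X$ is independent if there are reals $a<b$ such that $\bigcap_{n\in P} f_n^{-1}(-\infty,a)\cap\bigcap_{n\in M} f_n^{-1}(b,\infty)\neq\emptyset$ for all finite disjoint $P,M\subseteq\mathbb N$. A bounded family of real functions on $X$ is tame if it contains no independent sequence. A bounded subset $B\subseteq E$ is tame (in $E$) if for every $K\in{\rm eqc}(E^* )$ the family of functions $\{K\to\mathbb R,\ \varphi\mapsto\varphi(b)\}_{b\in B}$ is a tame family on $K$. $E$ is tame if every bounded subset of $E$ is tame. A bounded sequence $(x_n)$ in $E$ is an $l^1$-sequence (equivalent to the $l^1$-basis) if there exist a continuous seminorm $\rho$ on $E$ and $\delta>0$ such that $\delta\sum_{i=1}^n|c_i|\le\rho(\sum_{i=1}^n c_ix_i)$ for all $n$ and all reals $c_1,\dots,c_n$. *)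

theory Defs
  imports "HOL-Analysis.Analysis"
begin

definition locally_convex_space :: "'a::{real_vector,t2_space} itself \<Rightarrow> bool" where
  "locally_convex_space _ \<longleftrightarrow>
     continuous_on UNIV (\<lambda>p::'a \<times> 'a. fst p + snd p) \<and>
     continuous_on UNIV (\<lambda>p::real \<times> 'a. fst p *\<^sub>R snd p) \<and>
     (\<forall>U::'a set. open U \<and> 0 \<in> U \<longrightarrow> (\<exists>V. open V \<and> 0 \<in> V \<and> convex V \<and> V \<subseteq> U))"

definition tvs_bounded :: "'a::{real_vector,topological_space} set \<Rightarrow> bool" where
  "tvs_bounded B \<longleftrightarrow>
     (\<forall>U. open U \<and> 0 \<in> U \<longrightarrow> (\<exists>s>0. \<forall>t. t > s \<longrightarrow> B \<subseteq> (\<lambda>x. t *\<^sub>R x) ` U))"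

definition top_dual :: "('a::{real_vector,topological_space} \<Rightarrow> real) set" where
  "top_dual = {\<phi>. linear \<phi> \<and> continuous_on UNIV \<phi>}"

definition equicontinuous_family :: "('a::topological_space \<Rightarrow> real) set \<Rightarrow> bool" where
  "equicontinuous_family K \<longleftrightarrow>
     (\<forall>x \<epsilon>. \<epsilon> > 0 \<longrightarrow> (\<exists>U. open U \<and> x \<in> U \<and> (\<forall>\<phi>\<in>K. \<forall>y\<in>U. \<bar>\<phi> y - \<phi> x\<bar> < \<epsilon>)))"

text \<open>The weak-star topology on
E* is the topology of pointwise convergence, i.e. the subspace topology of the product
topology on 'a \<Rightarrow> real.\<close>
definition eqc :: "('a::{real_vector,topological_space} \<Rightarrow> real) set set" where
  "eqc = {K. K \<subseteq> top_dual \<and> equicontinuous_family K \<and>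
              compactin (product_topology (\<lambda>_. euclideanreal) UNIV) K}"

definition independent_seq :: "'x set \<Rightarrow> (nat \<Rightarrow> 'x \<Rightarrow> real) \<Rightarrow> bool" where
  "independent_seq X f \<longleftrightarrow>
     (\<exists>a b. a < b \<and> (\<forall>P M. finite P \<and> finite M \<and> P \<inter> M = {} \<longrightarrow>
        (\<exists>x\<in>X. (\<forall>n\<in>P. f n x < a) \<and> (\<forall>n\<in>M. f n x > b))))"

definition tame_family :: "'x set \<Rightarrow> ('x \<Rightarrow> real) set \<Rightarrow> bool" where
  "tame_family X F \<longleftrightarrow> \<not> (\<exists>f. range f \<subseteq> F \<and> independent_seq X f)"

definition tame_subset :: "'a::{real_vector,topological_space} set \<Rightarrow> bool" where
  "tame_subset B \<longleftrightarrow>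
     tvs_bounded B \<and> (\<forall>K\<in>eqc. tame_family K ((\<lambda>b. \<lambda>\<phi>::'a \<Rightarrow> real. \<phi> b) ` B))"

definition tame_space :: "'a::{real_vector,topological_space} itself \<Rightarrow> bool" where
  "tame_space _ \<longleftrightarrow> (\<forall>B::'a set. tvs_bounded B \<longrightarrow> tame_subset B)"

definition is_seminorm :: "('a::real_vector \<Rightarrow> real) \<Rightarrow> bool" where
  "is_seminorm \<rho> \<longleftrightarrow> (\<forall>x y. \<rho> (x + y) \<le> \<rho> x + \<rho> y) \<and> (\<forall>c x. \<rho> (c *\<^sub>R x) = \<bar>c\<bar> * \<rho> x)"

text \<open>Bounded l^1-sequence (equivalent to the l^1 basis).\<close>
definition l1_sequence :: "(nat \<Rightarrow> 'a::{real_vector,topological_space}) \<Rightarrow> bool" where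
  "l1_sequence x \<longleftrightarrow> tvs_bounded (range x) \<and>
     (\<exists>\<rho> \<delta>. is_seminorm \<rho> \<and> continuous_on UNIV \<rho> \<and> \<delta> > 0 \<and>
        (\<forall>n c. \<delta> * (\<Sum>i<n. \<bar>c i\<bar>) \<le> \<rho> (\<Sum>i<n. c i *\<^sub>R x i)))"

end

theory Submission
  imports Defs
begin


lemma sn_zero: "is_seminorm \<rho> \<Longrightarrow> \<rho> 0 = 0"
  unfolding is_seminorm_def by (metis abs_zero mult_zero_left scale_zero_left)

lemma sn_neg: "is_seminorm \<rho> \<Longrightarrow> \<rho> (- x) = \<rho> x"
  unfolding is_seminorm_def by (metis abs_minus_cancel abs_one mult_1 scaleR_minus1_left)

lemma sn_nonneg: "is_seminorm \<rho> \<Longrightarrow> \<rho> x \<ge> 0"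
proof -
  assume s: "is_seminorm \<rho>"
  have "\<rho> (x + - x) \<le> \<rho> x + \<rho> (- x)" using s unfolding is_seminorm_def by blast
  thus ?thesis using sn_zero[OF s] sn_neg[OF s, of x] by simp
qed

lemma sn_triangle: "is_seminorm \<rho> \<Longrightarrow> \<rho> (x + y) \<le> \<rho> x + \<rho> y"
  unfolding is_seminorm_def by blast

lemma sn_scale: "is_seminorm \<rho> \<Longrightarrow> \<rho> (c *\<^sub>R x) = \<bar>c\<bar> * \<rho> x"
  unfolding is_seminorm_def by blast

definition good :: "('a::real_vector \<Rightarrow> real) \<Rightarrow> ('a \<times> real) set \<Rightarrow> bool" where
  "good \<rho> G \<longleftrightarrow> G \<noteq> {} \<and> (\<forall>p\<in>G. \<forall>q\<in>G. (fst p + fst q, snd p + snd q) \<in> G) \<and>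
     (\<forall>p\<in>G. \<forall>c. (c *\<^sub>R fst p, c * snd p) \<in> G) \<and> (\<forall>p\<in>G. snd p \<le> \<rho> (fst p))"

lemma good_add: "good \<rho> G \<Longrightarrow> (x,a) \<in> G \<Longrightarrow> (y,b) \<in> G \<Longrightarrow> (x+y, a+b) \<in> G"
  unfolding good_def by force
lemma good_scale: "good \<rho> G \<Longrightarrow> (x,a) \<in> G \<Longrightarrow> (c *\<^sub>R x, c*a) \<in> G"
  unfolding good_def by force
lemma good_le: "good \<rho> G \<Longrightarrow> (x,a) \<in> G \<Longrightarrow> a \<le> \<rho> x"
  unfolding good_def by force
lemma good_zero: assumes "good \<rho> G" shows "(0,0) \<in> G"
proof -
  obtain x a where "(x,a) \<in> G" using assms unfolding good_def by auto
  from good_scale[OF assms this, of 0] show ?thesis by simp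
qed
lemma good_abs: assumes "is_seminorm \<rho>" "good \<rho> G" "(x,a) \<in> G" shows "\<bar>a\<bar> \<le> \<rho> x"
proof -
  have "(-1 *\<^sub>R x, -1 * a) \<in> G" using good_scale assms by blast
  hence "- a \<le> \<rho> (- x)" using good_le assms by fastforce
  thus ?thesis using sn_neg[OF assms(1)] good_le[OF assms(2,3)] by auto
qed
lemma good_fun: assumes "is_seminorm \<rho>" "good \<rho> G" "(x,a) \<in> G" "(x,b) \<in> G" shows "a = b"
proof -
  have "(-1 *\<^sub>R x, -1 * b) \<in> G" using good_scale assms by blast
  hence "(x + -1 *\<^sub>R x, a + -1 * b) \<in> G" using good_add assms by blast
  hence "\<bar>a - b\<bar> \<le> \<rho> 0" using good_abs[OF assms(1,2)] by fastforce
  thus ?thesis using sn_zero[OF assms(1)] by simp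
qed

lemma good_extend:
  assumes s: "is_seminorm \<rho>" and g: "good \<rho> G" and x0: "\<forall>a. (x0, a) \<notin> G"
  shows "\<exists>G'. good \<rho> G' \<and> G \<subseteq> G' \<and> G' \<noteq> G"
proof -
  define S where "S = (\<lambda>p. snd p - \<rho> (fst p - x0)) ` G"
  have Sne: "S \<noteq> {}" using g unfolding S_def good_def by auto
  have Sb: "s \<le> \<rho> (v + x0) - b" if "s \<in> S" "(v,b) \<in> G" for s v b
  proof -
    obtain y a where ya: "(y,a) \<in> G" "s = a - \<rho> (y - x0)" using \<open>s \<in> S\<close> unfolding S_def by auto
    have "a + b \<le> \<rho> (y + v)" using good_le[OF g good_add[OF g ya(1) that(2)]] .
    also have "\<rho> (y + v) = \<rho> ((y - x0) + (v + x0))" by (simp add: algebra_simps)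
    also have "\<dots> \<le> \<rho> (y - x0) + \<rho> (v + x0)" using sn_triangle[OF s] .
    finally show ?thesis using ya by simp
  qed
  define c where "c = Sup S"
  have bdd: "bdd_above S" using Sb good_zero[OF g] unfolding bdd_above_def by blast
  have c1: "a - \<rho> (y - x0) \<le> c" if "(y,a) \<in> G" for y a
    unfolding c_def by (rule cSup_upper[OF _ bdd]) (use that in \<open>force simp: S_def\<close>)
  have c2: "c \<le> \<rho> (v + x0) - b" if "(v,b) \<in> G" for v b
    unfolding c_def by (rule cSup_least[OF Sne]) (use Sb that in blast)
  define G' where "G' = {(y + t *\<^sub>R x0, a + t * c) | y a t. (y,a) \<in> G}"
  have dom: "a + t * c \<le> \<rho> (y + t *\<^sub>R x0)" if "(y,a) \<in> G" for y a t
  proof (cases "t = 0")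
    case True thus ?thesis using good_le[OF g that] by simp
  next
    case False
    show ?thesis
    proof (cases "t > 0")
      case True
      have m: "((1/t) *\<^sub>R y, (1/t) * a) \<in> G" using good_scale[OF g that] .
      have "c \<le> \<rho> ((1/t) *\<^sub>R y + x0) - (1/t) * a" using c2[OF m] .
      hence "t * c \<le> t * \<rho> ((1/t) *\<^sub>R y + x0) - a" using True
        by (simp add: field_simps mult_le_cancel_left_pos)
      also have "t * \<rho> ((1/t) *\<^sub>R y + x0) = \<rho> (t *\<^sub>R ((1/t) *\<^sub>R y + x0))"
        using sn_scale[OF s] True by simp
      also have "t *\<^sub>R ((1/t) *\<^sub>R y + x0) = y + t *\<^sub>R x0" using True by (simp add: algebra_simps)
      finally show ?thesis by simp
    next
      case neg: False
      define u where "u = - t"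
      have u: "u > 0" using neg False unfolding u_def by simp
      have m: "((1/u) *\<^sub>R y, (1/u) * a) \<in> G" using good_scale[OF g that] .
      have "(1/u) * a - \<rho> ((1/u) *\<^sub>R y - x0) \<le> c" using c1[OF m] .
      hence "u * ((1/u) * a - \<rho> ((1/u) *\<^sub>R y - x0)) \<le> u * c" using u
        by (intro mult_left_mono) auto
      hence "a - u * \<rho> ((1/u) *\<^sub>R y - x0) \<le> u * c" using u
        by (simp add: right_diff_distrib)
      also have "u * \<rho> ((1/u) *\<^sub>R y - x0) = \<rho> (u *\<^sub>R ((1/u) *\<^sub>R y - x0))"
        using sn_scale[OF s] u by simp
      also have "u *\<^sub>R ((1/u) *\<^sub>R y - x0) = y + t *\<^sub>R x0" using u by (simp add: algebra_simps u_def)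
      finally show ?thesis unfolding u_def by simp
    qed
  qed
  have memG': "(y + t *\<^sub>R x0, a + t * c) \<in> G'" if "(y,a) \<in> G" for y a t
    unfolding G'_def using that by blast
  have "good \<rho> G'"
    unfolding good_def
  proof (intro conjI ballI allI)
    show "G' \<noteq> {}" using good_zero[OF g] unfolding G'_def by blast
  next
    fix p q assume "p \<in> G'" "q \<in> G'"
    then obtain y a t y' a' t' where "p = (y + t *\<^sub>R x0, a + t * c)" "(y,a) \<in> G"
      "q = (y' + t' *\<^sub>R x0, a' + t' * c)" "(y',a') \<in> G" unfolding G'_def by blast
    moreover have "(y + y', a + a') \<in> G" using good_add[OF g] calculation by blast
    moreover have "((y + y') + (t + t') *\<^sub>R x0, (a + a') + (t + t') * c) \<in> G'"
      using memG' calculation by blast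
    ultimately show "(fst p + fst q, snd p + snd q) \<in> G'"
      by (simp add: algebra_simps)
  next
    fix p r assume "p \<in> G'"
    then obtain y a t where "p = (y + t *\<^sub>R x0, a + t * c)" "(y,a) \<in> G" unfolding G'_def by blast
    moreover have "(r *\<^sub>R y, r * a) \<in> G" using good_scale[OF g] calculation by blast
    moreover have "(r *\<^sub>R y + (r * t) *\<^sub>R x0, r * a + (r * t) * c) \<in> G'"
      using memG' calculation by blast
    ultimately show "(r *\<^sub>R fst p, r * snd p) \<in> G'"
      by (simp add: algebra_simps)
  next
    fix p assume "p \<in> G'"
    then show "snd p \<le> \<rho> (fst p)" using dom unfolding G'_def by auto
  qed
  moreover have "G \<subseteq> G'" unfolding G'_def by force
  moreover have "(x0, c) \<in> G'" using memG'[OF good_zero[OF g], of 1] by simp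
  ultimately show ?thesis using x0 by blast
qed

lemma hahn_banach_graph:
  assumes s: "is_seminorm \<rho>" and g0: "good \<rho> G0"
  shows "\<exists>\<phi>. linear \<phi> \<and> (\<forall>v. \<bar>\<phi> v\<bar> \<le> \<rho> v) \<and> (\<forall>(x,a)\<in>G0. \<phi> x = a)"
proof -
  define A where "A = {G. good \<rho> G \<and> G0 \<subseteq> G}"
  have "\<exists>M\<in>A. \<forall>X\<in>A. M \<subseteq> X \<longrightarrow> X = M"
  proof (rule subset_Zorn_nonempty)
    show "A \<noteq> {}" using g0 unfolding A_def by blast
  next
    fix C assume C: "C \<noteq> {}" "subset.chain A C"
    have CA: "C \<subseteq> A" and ch: "\<And>X Y. X \<in> C \<Longrightarrow> Y \<in> C \<Longrightarrow> X \<subseteq> Y \<or> Y \<subseteq> X"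
      using C(2) unfolding subset.chain_def by auto
    have gC: "\<And>X. X \<in> C \<Longrightarrow> good \<rho> X" using CA unfolding A_def by auto
    have "good \<rho> (\<Union>C)" unfolding good_def
    proof (intro conjI ballI allI)
      show "\<Union>C \<noteq> {}" using C(1) gC unfolding good_def by blast
    next
      fix p q assume "p \<in> \<Union>C" "q \<in> \<Union>C"
      then obtain X Y where XY: "X \<in> C" "Y \<in> C" "p \<in> X" "q \<in> Y" by blast
      show "(fst p + fst q, snd p + snd q) \<in> \<Union>C"
      proof (cases "X \<subseteq> Y")
        case True thus ?thesis using XY gC[OF XY(2)] unfolding good_def by blast
      next
        case False hence "Y \<subseteq> X" using ch XY by blast
        thus ?thesis using XY gC[OF XY(1)] unfolding good_def by blast
      qed
    next
      fix p c assume "p \<in> \<Union>C"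
      thus "(c *\<^sub>R fst p, c * snd p) \<in> \<Union>C" using gC unfolding good_def by blast
    next
      fix p assume "p \<in> \<Union>C"
      thus "snd p \<le> \<rho> (fst p)" using gC unfolding good_def by blast
    qed
    moreover have "G0 \<subseteq> \<Union>C" using C CA unfolding A_def by blast
    ultimately show "\<Union>C \<in> A" unfolding A_def by blast
  qed
  then obtain M where MA: "M \<in> A" and Mmax: "\<forall>X\<in>A. M \<subseteq> X \<longrightarrow> X = M" by blast
  have gM: "good \<rho> M" and G0M: "G0 \<subseteq> M" using MA unfolding A_def by auto
  have tot: "\<exists>a. (x, a) \<in> M" for x
  proof (rule ccontr)
    assume "\<nexists>a. (x, a) \<in> M"
    then obtain G' where "good \<rho> G'" "M \<subseteq> G'" "G' \<noteq> M" using good_extend[OF s gM] by blast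
    thus False using Mmax G0M unfolding A_def by blast
  qed
  define \<phi> where "\<phi> x = (THE a. (x,a) \<in> M)" for x
  have phM: "(x, \<phi> x) \<in> M" for x
    unfolding \<phi>_def by (rule theI') (use tot good_fun[OF s gM] in blast)
  have phe: "\<phi> x = a" if "(x,a) \<in> M" for x a using good_fun[OF s gM phM that] .
  have "linear \<phi>"
  proof (rule linearI)
    fix x y show "\<phi> (x + y) = \<phi> x + \<phi> y" using phe good_add[OF gM phM phM] by blast
  next
    fix r x show "\<phi> (r *\<^sub>R x) = r *\<^sub>R \<phi> x" using phe good_scale[OF gM phM] by simp
  qed
  moreover have "\<bar>\<phi> v\<bar> \<le> \<rho> v" for v using good_abs[OF s gM phM] .
  moreover have "\<forall>(x,a)\<in>G0. \<phi> x = a" using G0M phe by blast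
  ultimately show ?thesis by blast
qed



lemma lcs_transl_cont:
  assumes "locally_convex_space TYPE('a::{real_vector,t2_space})"
  shows "continuous_on UNIV (\<lambda>y::'a. y + c)"
proof -
  have a: "continuous_on UNIV (\<lambda>p::'a \<times> 'a. fst p + snd p)" using assms unfolding locally_convex_space_def by blast
  have "continuous_on UNIV (\<lambda>y::'a. (y, c))" by (intro continuous_on_Pair continuous_on_id continuous_on_const)
  from continuous_on_compose2[OF a this] show ?thesis by simp
qed

lemma lcs_scale_cont:
  assumes "locally_convex_space TYPE('a::{real_vector,t2_space})"
  shows "continuous_on UNIV (\<lambda>t::real. t *\<^sub>R (v::'a))"
proof -
  have a: "continuous_on UNIV (\<lambda>p::real \<times> 'a. fst p *\<^sub>R snd p)" using assms unfolding locally_convex_space_def by blast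
  have "continuous_on UNIV (\<lambda>t::real. (t, v))" by (intro continuous_on_Pair continuous_on_id continuous_on_const)
  from continuous_on_compose2[OF a this] show ?thesis by simp
qed

lemma cont_eps:
  fixes f :: "'a::topological_space \<Rightarrow> real"
  assumes "continuous_on UNIV f" "\<epsilon> > 0"
  shows "\<exists>U. open U \<and> x \<in> U \<and> (\<forall>y\<in>U. \<bar>f y - f x\<bar> < \<epsilon>)"
proof -
  have all: "\<forall>B. open B \<longrightarrow> open (f -` B \<inter> UNIV)"
    using iffD1[OF continuous_on_open_vimage[OF open_UNIV] assms(1)] .
  have o: "open (f -` {f x - \<epsilon> <..< f x + \<epsilon>})"
    using all[rule_format, OF open_greaterThanLessThan] by simp
  have "x \<in> f -` {f x - \<epsilon> <..< f x + \<epsilon>}" using assms(2) by simp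
  moreover have "\<forall>y\<in>f -` {f x - \<epsilon> <..< f x + \<epsilon>}. \<bar>f y - f x\<bar> < \<epsilon>"
    by (simp add: abs_diff_less_iff)
  ultimately show ?thesis using o by blast
qed

lemma eps_cont:
  fixes f :: "'a::topological_space \<Rightarrow> real"
  assumes "\<And>x \<epsilon>. \<epsilon> > 0 \<Longrightarrow> \<exists>U. open U \<and> x \<in> U \<and> (\<forall>y\<in>U. \<bar>f y - f x\<bar> < \<epsilon>)"
  shows "continuous_on UNIV f"
  unfolding continuous_on_topological
proof (intro ballI allI impI)
  fix x B assume "open B" "f x \<in> B"
  then obtain e where e: "e > 0" "\<forall>x'. \<bar>x' - f x\<bar> < e \<longrightarrow> x' \<in> B" using open_real by blast
  obtain U where U: "open U" "x \<in> U" "\<forall>y\<in>U. \<bar>f y - f x\<bar> < e" using assms[OF e(1)] by blast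
  have "\<forall>y\<in>UNIV. y \<in> U \<longrightarrow> f y \<in> B" using U(3) e(2) by simp
  thus "\<exists>A. open A \<and> x \<in> A \<and> (\<forall>y\<in>UNIV. y \<in> A \<longrightarrow> f y \<in> B)" using U(1,2) by blast
qed

lemma lin_sum_scale: "linear \<phi> \<Longrightarrow> \<phi> (\<Sum>i\<in>S. c i *\<^sub>R y i) = (\<Sum>i\<in>S. c i * \<phi> (y i))"
  by (simp add: linear_sum linear_scale)

lemma K_equi:
  assumes lcs: "locally_convex_space TYPE('a::{real_vector,t2_space})"
    and s: "is_seminorm \<rho>" and c: "continuous_on UNIV (\<rho>::'a \<Rightarrow> real)" and e: "\<epsilon> > 0"
  shows "\<exists>U. open U \<and> x \<in> U \<and> (\<forall>\<phi>\<in>{\<phi>. linear \<phi> \<and> (\<forall>v. \<bar>\<phi> v\<bar> \<le> \<rho> v)}. \<forall>y\<in>U. \<bar>\<phi> y - \<phi> x\<bar> < \<epsilon>)"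
proof -
  have g: "continuous_on UNIV (\<lambda>y. \<rho> (y + - x))"
    by (rule continuous_on_compose2[OF c lcs_transl_cont[OF lcs]]) simp
  obtain U where U: "open U" "x \<in> U" "\<forall>y\<in>U. \<bar>\<rho> (y + - x) - \<rho> (x + - x)\<bar> < \<epsilon>"
    using cont_eps[OF g e] by blast
  have "\<bar>\<phi> y - \<phi> x\<bar> < \<epsilon>" if "linear \<phi>" "\<forall>v. \<bar>\<phi> v\<bar> \<le> \<rho> v" "y \<in> U" for \<phi> y
  proof -
    have "\<phi> y - \<phi> x = \<phi> (y + - x)" using linear_diff[OF that(1), of y x] by simp
    hence "\<bar>\<phi> y - \<phi> x\<bar> \<le> \<rho> (y + - x)" using that(2) by simp
    also have "\<bar>\<rho> (y + - x)\<bar> < \<epsilon>" using U(3) that(3) sn_zero[OF s] by simp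
    hence "\<rho> (y + - x) < \<epsilon>" by linarith
    finally show ?thesis .
  qed
  thus ?thesis using U(1,2) by blast
qed

lemma K_eqc:
  assumes lcs: "locally_convex_space TYPE('a::{real_vector,t2_space})"
    and s: "is_seminorm \<rho>" and c: "continuous_on UNIV (\<rho>::'a \<Rightarrow> real)"
  shows "{\<phi>. linear \<phi> \<and> (\<forall>v. \<bar>\<phi> v\<bar> \<le> \<rho> v)} \<in> eqc"
proof -
  define K where "K = {\<phi>. linear \<phi> \<and> (\<forall>v. \<bar>\<phi> v\<bar> \<le> \<rho> v)}"
  have equi: "\<And>x \<epsilon>. \<epsilon> > 0 \<Longrightarrow> \<exists>U. open U \<and> x \<in> U \<and> (\<forall>\<phi>\<in>K. \<forall>y\<in>U. \<bar>\<phi> y - \<phi> x\<bar> < \<epsilon>)"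
    unfolding K_def using K_equi[OF lcs s c] by blast
  have dual: "K \<subseteq> top_dual"
  proof
    fix \<phi> assume p: "\<phi> \<in> K"
    have "continuous_on UNIV \<phi>"
    proof (rule eps_cont)
      fix x and \<epsilon>::real assume "\<epsilon> > 0"
      then obtain U where "open U" "x \<in> U" "\<forall>\<phi>\<in>K. \<forall>y\<in>U. \<bar>\<phi> y - \<phi> x\<bar> < \<epsilon>" using equi by blast
      thus "\<exists>U. open U \<and> x \<in> U \<and> (\<forall>y\<in>U. \<bar>\<phi> y - \<phi> x\<bar> < \<epsilon>)" using p by blast
    qed
    thus "\<phi> \<in> top_dual" using p unfolding K_def top_dual_def by blast
  qed
  have ec: "equicontinuous_family K" unfolding equicontinuous_family_def using equi by blast
  define T where "T = product_topology (\<lambda>_::'a. euclideanreal) UNIV"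
  have topT: "topspace T = UNIV" unfolding T_def by simp
  define C where "C = (\<lambda>(v::'a,w::'a,r::real). {\<phi> \<in> topspace T. \<phi> (v + r *\<^sub>R w) - \<phi> v - r * \<phi> w \<in> {0}} \<inter>
                 {\<phi> \<in> topspace T. \<phi> v \<in> {- \<rho> v .. \<rho> v}})"
  have Cc: "closedin T (C p)" for p
  proof -
    obtain v w r where p: "p = (v,w,r)" by (cases p) auto
    have m1: "continuous_map T euclideanreal (\<lambda>\<phi>. \<phi> (v + r *\<^sub>R w) - \<phi> v - r * \<phi> w)"
      unfolding T_def by (intro continuous_intros) auto
    have m2: "continuous_map T euclideanreal (\<lambda>\<phi>. \<phi> v)"
      unfolding T_def by (intro continuous_intros) auto
    show ?thesis unfolding p C_def prod.case
      by (intro closedin_Int closedin_continuous_map_preimage[OF m1] closedin_continuous_map_preimage[OF m2]) auto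
  qed
  have KC: "K = (\<Inter>p\<in>UNIV. C p)"
  proof (intro equalityI subsetI)
    fix \<phi> assume "\<phi> \<in> K"
    hence l: "linear \<phi>" and b: "\<forall>v. \<bar>\<phi> v\<bar> \<le> \<rho> v" unfolding K_def by auto
    show "\<phi> \<in> (\<Inter>p\<in>UNIV. C p)"
    proof
      fix p :: "'a \<times> 'a \<times> real"
      obtain v w r where p: "p = (v,w,r)" by (cases p) auto
      have "\<phi> (v + r *\<^sub>R w) = \<phi> v + r * \<phi> w" using linear_add[OF l] linear_scale[OF l] by simp
      moreover have "- \<rho> v \<le> \<phi> v" "\<phi> v \<le> \<rho> v" using b[rule_format, of v] by auto
      ultimately show "\<phi> \<in> C p" unfolding p C_def topT by simp
    qed
  next
    fix \<phi> assume "\<phi> \<in> (\<Inter>p\<in>UNIV. C p)"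
    hence hC: "\<phi> \<in> C (v,w,r)" for v w r by blast
    have h: "\<phi> (v + r *\<^sub>R w) = \<phi> v + r * \<phi> w" "- \<rho> v \<le> \<phi> v" "\<phi> v \<le> \<rho> v" for v w r
      using hC[of v w r] unfolding C_def prod.case by auto
    have z: "\<phi> 0 = 0" using h(1)[of 0 1 0] by simp
    have "linear \<phi>"
    proof (rule linearI)
      fix x y show "\<phi> (x + y) = \<phi> x + \<phi> y" using h(1)[of x 1 y] by simp
    next
      fix r x show "\<phi> (r *\<^sub>R x) = r *\<^sub>R \<phi> x" using h(1)[of 0 r x] z by simp
    qed
    moreover have "\<forall>v. \<bar>\<phi> v\<bar> \<le> \<rho> v"
    proof
      fix v show "\<bar>\<phi> v\<bar> \<le> \<rho> v" using h(2)[of v] h(3)[of v] by linarith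
    qed
    ultimately show "\<phi> \<in> K" unfolding K_def by blast
  qed
  have cl: "closedin T K" unfolding KC by (intro closedin_INT) (use Cc in auto)
  have box: "compactin T (PiE UNIV (\<lambda>v. {- \<rho> v .. \<rho> v}))"
    unfolding T_def compactin_PiE by (auto simp: compactin_euclidean_iff)
  have sub: "K \<subseteq> PiE UNIV (\<lambda>v. {- \<rho> v .. \<rho> v})"
    unfolding K_def PiE_UNIV_domain
  proof (intro subsetI Pi_I)
    fix \<phi> v assume "\<phi> \<in> {\<phi>. linear \<phi> \<and> (\<forall>v. \<bar>\<phi> v\<bar> \<le> \<rho> v)}"
    hence "\<bar>\<phi> v\<bar> \<le> \<rho> v" by blast
    thus "\<phi> v \<in> {- \<rho> v..\<rho> v}" by (simp add: abs_le_iff)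
  qed
  have "compactin T K" by (rule closed_compactin[OF box sub cl])
  thus ?thesis using dual ec unfolding eqc_def T_def K_def by blast
qed

lemma l1_not_tame:
  assumes lcs: "locally_convex_space TYPE('a::{real_vector,t2_space})"
    and l1: "l1_sequence (x::nat \<Rightarrow> 'a)" and rB: "range x \<subseteq> B"
  shows "\<not> tame_subset B"
proof -
  obtain \<rho> \<delta> where s: "is_seminorm \<rho>" and c: "continuous_on UNIV \<rho>" and d: "\<delta> > 0"
    and ineq: "\<And>n c. \<delta> * (\<Sum>i<n. \<bar>c i\<bar>) \<le> \<rho> (\<Sum>i<n. c i *\<^sub>R x i)"
    using l1 unfolding l1_sequence_def by blast
  define K where "K = {\<phi>. linear \<phi> \<and> (\<forall>v. \<bar>\<phi> v\<bar> \<le> \<rho> v)}"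
  have Ke: "K \<in> eqc" unfolding K_def by (rule K_eqc[OF lcs s c])
  have ind: "independent_seq K (\<lambda>n \<phi>. \<phi> (x n))"
    unfolding independent_seq_def
  proof (rule exI[of _ "- \<delta> / 2"], rule exI[of _ "\<delta> / 2"], intro conjI allI impI)
    show "- \<delta> / 2 < \<delta> / 2" using d by simp
  next
    fix P M :: "nat set" assume PM: "finite P \<and> finite M \<and> P \<inter> M = {}"
    obtain N where N: "P \<union> M \<subseteq> {..<N}" using finite_nat_bounded[of "P \<union> M"] PM by blast
    define sg where "sg i = (if i \<in> P then -1 else if i \<in> M then 1 else (0::real))" for i
    define F where "F c = ((\<Sum>i<N. c i *\<^sub>R x i), \<delta> * (\<Sum>i<N. c i * sg i))" for c
    define G0 where "G0 = range F"
    have sgb: "\<bar>sg i\<bar> \<le> 1" for i unfolding sg_def by auto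
    have "good \<rho> G0" unfolding good_def
    proof (intro conjI ballI allI)
      show "G0 \<noteq> {}" unfolding G0_def by blast
    next
      fix p q assume "p \<in> G0" "q \<in> G0"
      then obtain c d where pq: "p = F c" "q = F d" unfolding G0_def by blast
      have "(fst p + fst q, snd p + snd q) = F (\<lambda>i. c i + d i)"
        unfolding pq F_def by (simp add: sum.distrib scaleR_add_left distrib_left distrib_right)
      thus "(fst p + fst q, snd p + snd q) \<in> G0" unfolding G0_def by simp
    next
      fix p and r :: real assume "p \<in> G0"
      then obtain c where pq: "p = F c" unfolding G0_def by blast
      have "(r *\<^sub>R fst p, r * snd p) = F (\<lambda>i. r * c i)"
        unfolding pq F_def by (simp add: scaleR_sum_right sum_distrib_left mult.assoc mult.left_commute)
      thus "(r *\<^sub>R fst p, r * snd p) \<in> G0" unfolding G0_def by simp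
    next
      fix p assume "p \<in> G0"
      then obtain c where pq: "p = F c" unfolding G0_def by blast
      have "(\<Sum>i<N. c i * sg i) \<le> (\<Sum>i<N. \<bar>c i\<bar>)"
      proof (rule sum_mono)
        fix i have "c i * sg i \<le> \<bar>c i * sg i\<bar>" by simp
        also have "\<dots> = \<bar>c i\<bar> * \<bar>sg i\<bar>" by (simp add: abs_mult)
        also have "\<dots> \<le> \<bar>c i\<bar>" using sgb[of i] by (simp add: mult_left_le)
        finally show "c i * sg i \<le> \<bar>c i\<bar>" .
      qed
      hence "\<delta> * (\<Sum>i<N. c i * sg i) \<le> \<delta> * (\<Sum>i<N. \<bar>c i\<bar>)" using d by (simp add: mult_left_mono)
      also have "\<dots> \<le> \<rho> (\<Sum>i<N. c i *\<^sub>R x i)" by (rule ineq)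
      finally show "snd p \<le> \<rho> (fst p)" unfolding pq F_def by simp
    qed
    then obtain \<phi> where l: "linear \<phi>" and b: "\<forall>v. \<bar>\<phi> v\<bar> \<le> \<rho> v" and ag: "\<forall>(y,a)\<in>G0. \<phi> y = a"
      using hahn_banach_graph[OF s] by blast
    have val: "\<phi> (x j) = \<delta> * sg j" if "j < N" for j
    proof -
      define e where "e i = (if i = j then 1 else (0::real))" for i
      have "F e = (x j, \<delta> * sg j)" unfolding F_def e_def using that
        by (simp add: if_distrib[of "\<lambda>t. t *\<^sub>R _"] if_distrib[of "\<lambda>t. t * _"] sum.delta cong: if_cong)
      moreover have "F e \<in> G0" unfolding G0_def by simp
      ultimately show ?thesis using ag by auto
    qed
    have "\<phi> \<in> K" unfolding K_def using l b by blast
    moreover have "\<forall>n\<in>P. \<phi> (x n) < - \<delta> / 2"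
    proof
      fix n assume "n \<in> P" thus "\<phi> (x n) < - \<delta> / 2" using val[of n] N d unfolding sg_def by auto
    qed
    moreover have "\<forall>n\<in>M. \<phi> (x n) > \<delta> / 2"
    proof
      fix n assume n: "n \<in> M"
      hence "n \<notin> P" using PM by blast
      thus "\<phi> (x n) > \<delta> / 2" using n val[of n] N d unfolding sg_def by auto
    qed
    ultimately show "\<exists>\<phi>\<in>K. (\<forall>n\<in>P. \<phi> (x n) < - \<delta> / 2) \<and> (\<forall>n\<in>M. \<phi> (x n) > \<delta> / 2)" by blast
  qed
  have "range (\<lambda>n \<phi>. \<phi> (x n)) \<subseteq> (\<lambda>b. \<lambda>\<phi>::'a \<Rightarrow> real. \<phi> b) ` B" using rB by blast
  hence "\<not> tame_family K ((\<lambda>b. \<lambda>\<phi>::'a \<Rightarrow> real. \<phi> b) ` B)"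
    unfolding tame_family_def using ind by blast
  thus ?thesis unfolding tame_subset_def using Ke by blast
qed



lemma not_tame_l1:
  assumes lcs: "locally_convex_space TYPE('a::{real_vector,t2_space})"
    and bB: "tvs_bounded (B::'a set)" and nt: "\<not> tame_subset B"
  shows "\<exists>x. range x \<subseteq> B \<and> l1_sequence x"
proof -
  obtain K where Ke: "K \<in> eqc" and ntf: "\<not> tame_family K ((\<lambda>b. \<lambda>\<phi>::'a \<Rightarrow> real. \<phi> b) ` B)"
    using nt bB unfolding tame_subset_def by blast
  obtain f where rf: "range f \<subseteq> (\<lambda>b. \<lambda>\<phi>::'a \<Rightarrow> real. \<phi> b) ` B" and indf: "independent_seq K f"
    using ntf unfolding tame_family_def by blast
  obtain a b where ab: "a < b" and ind0: "\<forall>P M. finite P \<and> finite M \<and> P \<inter> M = {} \<longrightarrow>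
        (\<exists>\<phi>\<in>K. (\<forall>n\<in>P. f n \<phi> < a) \<and> (\<forall>n\<in>M. f n \<phi> > b))"
    using indf unfolding independent_seq_def by (elim exE conjE) (rule that)
  have ind: "\<exists>\<phi>\<in>K. (\<forall>n\<in>P. f n \<phi> < a) \<and> (\<forall>n\<in>M. f n \<phi> > b)"
    if "finite P" "finite M" "P \<inter> M = {}" for P M
    using ind0 that by simp
  have ex: "\<forall>n. \<exists>y. y \<in> B \<and> f n = (\<lambda>\<phi>. \<phi> y)"
  proof
    fix n have "f n \<in> (\<lambda>b. \<lambda>\<phi>::'a \<Rightarrow> real. \<phi> b) ` B" using rf by (rule subsetD) simp
    thus "\<exists>y. y \<in> B \<and> f n = (\<lambda>\<phi>. \<phi> y)" by (elim imageE) (rule exI, rule conjI)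
  qed
  obtain x where x: "\<forall>n. x n \<in> B \<and> f n = (\<lambda>\<phi>. \<phi> (x n))"
    using choice[OF ex] by (elim exE) (rule that)
  have xB: "\<And>n. x n \<in> B" and fx: "\<And>n. f n = (\<lambda>\<phi>. \<phi> (x n))" using x by auto
  have Klin: "\<And>\<phi>. \<phi> \<in> K \<Longrightarrow> linear \<phi>" using Ke unfolding eqc_def top_dual_def by blast
  have equi: "\<And>x \<epsilon>. \<epsilon> > 0 \<Longrightarrow> \<exists>U. open U \<and> x \<in> U \<and> (\<forall>\<phi>\<in>K. \<forall>y\<in>U. \<bar>\<phi> y - \<phi> x\<bar> < \<epsilon>)"
    using Ke unfolding eqc_def equicontinuous_family_def by blast
  have Kne: "K \<noteq> {}" using ind[of "{}" "{}"] by auto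
  have bnd: "\<exists>C. \<forall>\<phi>\<in>K. \<bar>\<phi> v\<bar> \<le> C" for v
  proof -
    obtain U where U: "open U" "0 \<in> U" "\<forall>\<phi>\<in>K. \<forall>y\<in>U. \<bar>\<phi> y - \<phi> 0\<bar> < 1"
      using equi[of 1 0] by auto
    have allo: "\<forall>B. open B \<longrightarrow> open ((\<lambda>t::real. t *\<^sub>R v) -` B \<inter> UNIV)"
      using iffD1[OF continuous_on_open_vimage[OF open_UNIV] lcs_scale_cont[OF lcs]] .
    have "open ((\<lambda>t::real. t *\<^sub>R v) -` U)" using allo[rule_format, OF U(1)] by simp
    moreover have "(0::real) \<in> (\<lambda>t::real. t *\<^sub>R v) -` U" using U(2) by simp
    ultimately obtain e where e: "e > 0" "\<forall>t. \<bar>t - 0\<bar> < e \<longrightarrow> t \<in> (\<lambda>t::real. t *\<^sub>R v) -` U"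
      unfolding open_real by blast
    have inU: "(e/2) *\<^sub>R v \<in> U" using e by simp
    have "\<bar>\<phi> v\<bar> \<le> 2 / e" if "\<phi> \<in> K" for \<phi>
    proof -
      have l: "linear \<phi>" using Klin[OF that] .
      have "\<bar>\<phi> ((e/2) *\<^sub>R v) - \<phi> 0\<bar> < 1" using U(3) that inU by blast
      hence "\<bar>(e/2) * \<phi> v\<bar> < 1" using linear_scale[OF l] linear_0[OF l] by simp
      hence "(e/2) * \<bar>\<phi> v\<bar> < 1" using e by (simp add: abs_mult)
      hence "e * \<bar>\<phi> v\<bar> \<le> 2" by linarith
      thus ?thesis using e by (simp add: field_simps)
    qed
    thus ?thesis by blast
  qed
  define \<rho> where "\<rho> v = (SUP \<phi>\<in>K. \<bar>\<phi> v\<bar>)" for v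
  have up: "\<bar>\<phi> v\<bar> \<le> \<rho> v" if "\<phi> \<in> K" for \<phi> v
  proof -
    obtain C where "\<forall>\<phi>\<in>K. \<bar>\<phi> v\<bar> \<le> C" using bnd by blast
    hence "bdd_above ((\<lambda>\<phi>. \<bar>\<phi> v\<bar>) ` K)" by (auto intro: bdd_aboveI2)
    thus ?thesis unfolding \<rho>_def by (rule cSUP_upper[OF that])
  qed
  have least: "\<rho> v \<le> C" if "\<And>\<phi>. \<phi> \<in> K \<Longrightarrow> \<bar>\<phi> v\<bar> \<le> C" for v C
    unfolding \<rho>_def by (rule cSUP_least[OF Kne that])
  have tri: "\<rho> (v + w) \<le> \<rho> v + \<rho> w" for v w
  proof (rule least)
    fix \<phi> assume p: "\<phi> \<in> K"
    have "\<bar>\<phi> (v + w)\<bar> = \<bar>\<phi> v + \<phi> w\<bar>" using linear_add[OF Klin[OF p]] by simp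
    also have "\<dots> \<le> \<bar>\<phi> v\<bar> + \<bar>\<phi> w\<bar>" by (rule abs_triangle_ineq)
    finally show "\<bar>\<phi> (v + w)\<bar> \<le> \<rho> v + \<rho> w" using up[OF p, of v] up[OF p, of w] by linarith
  qed
  have scl: "\<rho> (r *\<^sub>R v) \<le> \<bar>r\<bar> * \<rho> v" for r v
  proof (rule least)
    fix \<phi> assume p: "\<phi> \<in> K"
    have "\<bar>\<phi> (r *\<^sub>R v)\<bar> = \<bar>r\<bar> * \<bar>\<phi> v\<bar>" using linear_scale[OF Klin[OF p]] by (simp add: abs_mult)
    also have "\<dots> \<le> \<bar>r\<bar> * \<rho> v" using up[OF p, of v] by (simp add: mult_left_mono)
    finally show "\<bar>\<phi> (r *\<^sub>R v)\<bar> \<le> \<bar>r\<bar> * \<rho> v" .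
  qed
  obtain \<phi>0 where p0: "\<phi>0 \<in> K" using Kne by blast
  have nn: "\<rho> v \<ge> 0" for v using up[OF p0, of v] by linarith
  have sc: "\<rho> (r *\<^sub>R v) = \<bar>r\<bar> * \<rho> v" for r v
  proof (cases "r = 0")
    case True
    have "\<rho> (0 *\<^sub>R v) \<le> 0" using scl[of 0 v] by simp
    thus ?thesis using True nn[of 0] by simp
  next
    case False
    have "\<rho> v = \<rho> (inverse r *\<^sub>R (r *\<^sub>R v))" using False by simp
    also have "\<dots> \<le> \<bar>inverse r\<bar> * \<rho> (r *\<^sub>R v)" by (rule scl)
    finally have "\<bar>r\<bar> * \<rho> v \<le> \<bar>r\<bar> * (\<bar>inverse r\<bar> * \<rho> (r *\<^sub>R v))"
      by (simp add: mult_left_mono)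
    also have "\<dots> = \<rho> (r *\<^sub>R v)" using False by (simp add: abs_inverse)
    finally show ?thesis using scl[of r v] by linarith
  qed
  have sn: "is_seminorm \<rho>" unfolding is_seminorm_def using tri sc by blast
  have cont: "continuous_on UNIV \<rho>"
  proof (rule eps_cont)
    fix x0 and \<epsilon> :: real assume e: "\<epsilon> > 0"
    obtain U where U: "open U" "x0 \<in> U" "\<forall>\<phi>\<in>K. \<forall>y\<in>U. \<bar>\<phi> y - \<phi> x0\<bar> < \<epsilon>/2"
      using equi[of "\<epsilon>/2" x0] e by auto
    have "\<bar>\<rho> y - \<rho> x0\<bar> < \<epsilon>" if y: "y \<in> U" for y
    proof -
      have "\<rho> y \<le> \<rho> x0 + \<epsilon>/2"
      proof (rule least)
        fix \<phi> assume p: "\<phi> \<in> K"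
        have "\<bar>\<phi> y - \<phi> x0\<bar> < \<epsilon>/2" using U(3) p y by blast
        thus "\<bar>\<phi> y\<bar> \<le> \<rho> x0 + \<epsilon>/2" using up[OF p, of x0] by linarith
      qed
      moreover have "\<rho> x0 \<le> \<rho> y + \<epsilon>/2"
      proof (rule least)
        fix \<phi> assume p: "\<phi> \<in> K"
        have "\<bar>\<phi> y - \<phi> x0\<bar> < \<epsilon>/2" using U(3) p y by blast
        thus "\<bar>\<phi> x0\<bar> \<le> \<rho> y + \<epsilon>/2" using up[OF p, of y] by linarith
      qed
      ultimately show ?thesis using e by linarith
    qed
    thus "\<exists>U. open U \<and> x0 \<in> U \<and> (\<forall>y\<in>U. \<bar>\<rho> y - \<rho> x0\<bar> < \<epsilon>)" using U(1,2) by blast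
  qed
  have main: "((b - a) / 2) * (\<Sum>i<n. \<bar>c i\<bar>) \<le> \<rho> (\<Sum>i<n. c i *\<^sub>R x i)" for n c
  proof -
    define Pn where "Pn = {i \<in> {..<n}. c i < 0}"
    define Mn where "Mn = {i \<in> {..<n}. c i > 0}"
    have fin: "finite Pn" "finite Mn" "Pn \<inter> Mn = {}" unfolding Pn_def Mn_def by auto
    obtain \<phi>1 where p1: "\<phi>1 \<in> K" "\<forall>i\<in>Pn. \<phi>1 (x i) < a" "\<forall>i\<in>Mn. \<phi>1 (x i) > b"
      using ind[OF fin] fx by auto
    obtain \<phi>2 where p2: "\<phi>2 \<in> K" "\<forall>i\<in>Mn. \<phi>2 (x i) < a" "\<forall>i\<in>Pn. \<phi>2 (x i) > b"
      using ind[OF fin(2,1)] fin(3) fx by (auto simp: Int_commute)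
    define v where "v = (\<Sum>i<n. c i *\<^sub>R x i)"
    have tm: "(b - a) * \<bar>c i\<bar> \<le> c i * (\<phi>1 (x i) - \<phi>2 (x i))" if "i < n" for i
    proof (cases "c i > 0")
      case True
      hence "i \<in> Mn" using that unfolding Mn_def by simp
      hence "b - a \<le> \<phi>1 (x i) - \<phi>2 (x i)" using p1(3) p2(2) by fastforce
      hence "c i * (b - a) \<le> c i * (\<phi>1 (x i) - \<phi>2 (x i))" using True by (simp add: mult_left_mono)
      thus ?thesis using True by (simp add: mult.commute)
    next
      case False
      show ?thesis
      proof (cases "c i < 0")
        case True
        hence "i \<in> Pn" using that unfolding Pn_def by simp
        hence "b - a \<le> \<phi>2 (x i) - \<phi>1 (x i)" using p1(2) p2(3) by fastforce
        hence "(- c i) * (b - a) \<le> (- c i) * (\<phi>2 (x i) - \<phi>1 (x i))" using True by (simp add: mult_left_mono)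
        thus ?thesis using True by (simp add: algebra_simps)
      next
        case False2: False
        hence "c i = 0" using False by simp
        thus ?thesis by simp
      qed
    qed
    have "(b - a) * (\<Sum>i<n. \<bar>c i\<bar>) = (\<Sum>i<n. (b - a) * \<bar>c i\<bar>)" by (simp add: sum_distrib_left)
    also have "\<dots> \<le> (\<Sum>i<n. c i * (\<phi>1 (x i) - \<phi>2 (x i)))" by (rule sum_mono) (use tm in auto)
    also have "\<dots> = (\<Sum>i<n. c i * \<phi>1 (x i)) - (\<Sum>i<n. c i * \<phi>2 (x i))"
      by (simp add: right_diff_distrib sum_subtractf)
    also have "\<dots> = \<phi>1 v - \<phi>2 v"
    proof -
      have e1: "\<phi>1 v = (\<Sum>i<n. c i * \<phi>1 (x i))" unfolding v_def by (rule lin_sum_scale[OF Klin[OF p1(1)]])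
      have e2: "\<phi>2 v = (\<Sum>i<n. c i * \<phi>2 (x i))" unfolding v_def by (rule lin_sum_scale[OF Klin[OF p2(1)]])
      show ?thesis unfolding e1 e2 ..
    qed
    also have "\<dots> \<le> \<bar>\<phi>1 v\<bar> + \<bar>\<phi>2 v\<bar>" by linarith
    also have "\<dots> \<le> 2 * \<rho> v" using up[OF p1(1), of v] up[OF p2(1), of v] by linarith
    finally show ?thesis unfolding v_def by simp
  qed
  have rB: "range x \<subseteq> B" using xB by blast
  have bx: "tvs_bounded (range x)" unfolding tvs_bounded_def
  proof (intro allI impI)
    fix U :: "'a set" assume U: "open U \<and> 0 \<in> U"
    then obtain s where s: "s > 0" "\<forall>t. t > s \<longrightarrow> B \<subseteq> (\<lambda>x. t *\<^sub>R x) ` U"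
      using bB unfolding tvs_bounded_def by blast
    have "\<forall>t. t > s \<longrightarrow> range x \<subseteq> (\<lambda>x. t *\<^sub>R x) ` U" using s(2) rB by (meson order_trans)
    thus "\<exists>s>0. \<forall>t. t > s \<longrightarrow> range x \<subseteq> (\<lambda>x. t *\<^sub>R x) ` U" using s(1) by blast
  qed
  have dpos: "(b - a) / 2 > 0" using ab by simp
  have "l1_sequence x" unfolding l1_sequence_def
  proof (rule conjI[OF bx], rule exI[of _ \<rho>], rule exI[of _ "(b - a) / 2"])
    show "is_seminorm \<rho> \<and> continuous_on UNIV \<rho> \<and> (b - a) / 2 > 0 \<and>
      (\<forall>n c. (b - a) / 2 * (\<Sum>i<n. \<bar>c i\<bar>) \<le> \<rho> (\<Sum>i<n. c i *\<^sub>R x i))"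
      using sn cont dpos main by blast
  qed
  thus ?thesis using xB by blast
qed


theorem theorem6p1:
  assumes "locally_convex_space TYPE('a::{real_vector,t2_space})"
  shows "(\<forall>B::'a set. tvs_bounded B \<longrightarrow>
            (tame_subset B \<longleftrightarrow> \<not> (\<exists>x. range x \<subseteq> B \<and> l1_sequence x))) \<and>
         (tame_space TYPE('a) \<longleftrightarrow> \<not> (\<exists>x::nat \<Rightarrow> 'a. l1_sequence x))"
proof -
  have p1: "tame_subset B \<longleftrightarrow> \<not> (\<exists>x. range x \<subseteq> B \<and> l1_sequence x)" if bB: "tvs_bounded (B::'a set)" for B
  proof
    assume "tame_subset B"
    thus "\<not> (\<exists>x. range x \<subseteq> B \<and> l1_sequence x)" using l1_not_tame[OF assms] by blast
  next
    assume "\<not> (\<exists>x. range x \<subseteq> B \<and> l1_sequence x)"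
    thus "tame_subset B" using not_tame_l1[OF assms bB] by blast
  qed
  have p2: "tame_space TYPE('a) \<longleftrightarrow> \<not> (\<exists>x::nat \<Rightarrow> 'a. l1_sequence x)"
  proof
    assume t: "tame_space TYPE('a)"
    show "\<not> (\<exists>x::nat \<Rightarrow> 'a. l1_sequence x)"
    proof
      assume "\<exists>x::nat \<Rightarrow> 'a. l1_sequence x"
      then obtain x :: "nat \<Rightarrow> 'a" where l: "l1_sequence x" by blast
      hence "tvs_bounded (range x)" unfolding l1_sequence_def by blast
      hence "tame_subset (range x)" using t unfolding tame_space_def by blast
      thus False using l1_not_tame[OF assms l, of "range x"] by blast
    qed
  next
    assume n: "\<not> (\<exists>x::nat \<Rightarrow> 'a. l1_sequence x)"
    show "tame_space TYPE('a)" unfolding tame_space_def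
    proof (intro allI impI)
      fix B :: "'a set" assume "tvs_bounded B"
      thus "tame_subset B" using p1 n by blast
    qed
  qed
  show ?thesis using p1 p2 by blast
qed

end
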